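(* Consider any fractional two-stage algorithm that in the first stage chooses a fractional matching $x$ of $(D_1,S,E_1)$ (as a function of the first-stage graph and the advice $A$) and in the second stage chooses an optimal solution of (P2) with respect to $x$, and suppose it is $R$-robust and $C$-consistent, i.e. its value $\mathsf{ALG}(G,A)=\sum_j w_j(x_j+y_j)$ satisfies $\mathsf{ALG}(G,A)\ge R\cdot\mathsf{OPT}(G)$ and $\mathsf{ALG}(G,A)\ge C\cdot\mathsf{ADVICE}(G,A)$ for all $G,A$. Define the randomized integral algorithm which samples a random matching $M_1\subseteq E_1$ with $\Pr[(i,j)\in M_1]=x_{ij}$ for all $(i,j)\in E_1$, and then takes $M_2$ to be a maximum-weight matching among the edges of $E_2$ whose offline endpoint is not covered by $M_1$. Then the expected weight of offline vertices covered by $M_1\cup M_2$ is at least $R\cdot\mathsf{OPT}(G)$ and at least $C\cdot\mathsf{ADVICE}(G,A)$ for all $G,A$.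
   Context: Setting (two-stage vertex-weighted bipartite matching with advice). A bipartite graph $G=(D,S,E)$ has offline vertices $S$ with weights $w_j\ge0$ and online vertices $D=D_1\sqcup D_2$; $E_k$ is the set of edges between $D_k$ and $S$. The advice is a matching $A\subseteq E_1$; $S_1$ is the set of offline vertices covered by $A$. A fractional matching $x$ of $(D_1,S,E_1)$ satisfies $x_{ij}\ge0$, $\sum_{j}x_{ij}\le1$ for each $i\in D_1$, and $x_j:=\sum_i x_{ij}\le 1$ for each $j\in S$ (such $x$ is a convex combination of integral matchings, so the sampling is possible). (P2): maximize $\sum_{j\in S}w_jy_j$ subject to $y_{ij}\ge0$ for $(i,j)\in E_2$, $\sum_j y_{ij}\le1$ ($i\in D_2$), $y_j:=\sum_i y_{ij}\le 1-x_j$ ($j\in S$). $\mathsf{OPT}(G)$ is the maximum weight of a matching in $G$ (weight = sum of weights of covered offline vertices); $\mathsf{ADVICE}(G,A)=\sum_{j\in S_1}w_j+\max\{\sum_{j\text{ covered by }M}w_j: M\subseteq E_2\text{ a matching covering no vertex of } S_1\}$. *)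

theory Defs
  imports "HOL-Probability.Probability_Mass_Function"
begin

text \<open>Edges are pairs (online vertex, offline vertex).  Online vertices have type 'd,
  offline vertices type 's.\<close>

definition is_matching :: "('d \<times> 's) set \<Rightarrow> bool" where
  "is_matching M \<longleftrightarrow> (\<forall>e\<in>M. \<forall>e'\<in>M. e \<noteq> e' \<longrightarrow> fst e \<noteq> fst e' \<and> snd e \<noteq> snd e')"

definition mweight :: "('s \<Rightarrow> real) \<Rightarrow> ('d \<times> 's) set \<Rightarrow> real" where
  "mweight w M = sum w (snd ` M)"

definition max_mw :: "('s \<Rightarrow> real) \<Rightarrow> ('d \<times> 's) set \<Rightarrow> real" where
  "max_mw w E = Max {mweight w M | M. M \<subseteq> E \<and> is_matching M}"

definition valid_instance ::
  "'d set \<Rightarrow> 'd set \<Rightarrow> 's set \<Rightarrow> ('d \<times> 's) set \<Rightarrow> ('d \<times> 's) set \<Rightarrow> ('s \<Rightarrow> real)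
    \<Rightarrow> ('d \<times> 's) set \<Rightarrow> bool" where
  "valid_instance D1 D2 S E1 E2 w A \<longleftrightarrow>
     finite D1 \<and> finite D2 \<and> finite S \<and> D1 \<inter> D2 = {} \<and>
     E1 \<subseteq> D1 \<times> S \<and> E2 \<subseteq> D2 \<times> S \<and> (\<forall>j\<in>S. 0 \<le> w j) \<and>
     A \<subseteq> E1 \<and> is_matching A"

definition OPT :: "('s \<Rightarrow> real) \<Rightarrow> ('d \<times> 's) set \<Rightarrow> ('d \<times> 's) set \<Rightarrow> real" where
  "OPT w E1 E2 = max_mw w (E1 \<union> E2)"

definition ADVICE :: "('s \<Rightarrow> real) \<Rightarrow> ('d \<times> 's) set \<Rightarrow> ('d \<times> 's) set \<Rightarrow> real" where
  "ADVICE w E2 A = sum w (snd ` A) + max_mw w {e \<in> E2. snd e \<notin> snd ` A}"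

text \<open>x_j for a fractional assignment x on the edge set E.\<close>
definition load :: "('d \<times> 's) set \<Rightarrow> ('d \<times> 's \<Rightarrow> real) \<Rightarrow> 's \<Rightarrow> real" where
  "load E x j = sum x {e \<in> E. snd e = j}"

definition frac_matching ::
  "'d set \<Rightarrow> 's set \<Rightarrow> ('d \<times> 's) set \<Rightarrow> ('d \<times> 's \<Rightarrow> real) \<Rightarrow> bool" where
  "frac_matching D S E x \<longleftrightarrow>
     (\<forall>e\<in>E. 0 \<le> x e) \<and>
     (\<forall>i\<in>D. sum x {e \<in> E. fst e = i} \<le> 1) \<and>
     (\<forall>j\<in>S. load E x j \<le> 1)"

definition P2_feasible ::
  "'d set \<Rightarrow> 's set \<Rightarrow> ('d \<times> 's) set \<Rightarrow> ('d \<times> 's) set \<Rightarrow> ('d \<times> 's \<Rightarrow> real)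
     \<Rightarrow> ('d \<times> 's \<Rightarrow> real) \<Rightarrow> bool" where
  "P2_feasible D2 S E1 E2 x y \<longleftrightarrow>
     (\<forall>e\<in>E2. 0 \<le> y e) \<and>
     (\<forall>i\<in>D2. sum y {e \<in> E2. fst e = i} \<le> 1) \<and>
     (\<forall>j\<in>S. load E2 y j \<le> 1 - load E1 x j)"

definition P2_opt ::
  "'d set \<Rightarrow> 's set \<Rightarrow> ('d \<times> 's) set \<Rightarrow> ('d \<times> 's) set \<Rightarrow> ('s \<Rightarrow> real)
     \<Rightarrow> ('d \<times> 's \<Rightarrow> real) \<Rightarrow> real" where
  "P2_opt D2 S E1 E2 w x =
     Sup {(\<Sum>j\<in>S. w j * load E2 y j) | y. P2_feasible D2 S E1 E2 x y}"

definition ALG_frac ::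
  "'d set \<Rightarrow> 's set \<Rightarrow> ('d \<times> 's) set \<Rightarrow> ('d \<times> 's) set \<Rightarrow> ('s \<Rightarrow> real)
     \<Rightarrow> ('d \<times> 's \<Rightarrow> real) \<Rightarrow> real" where
  "ALG_frac D2 S E1 E2 w x =
     (\<Sum>j\<in>S. w j * load E1 x j) + P2_opt D2 S E1 E2 w x"

definition second_stage ::
  "('s \<Rightarrow> real) \<Rightarrow> ('d \<times> 's) set \<Rightarrow> ('d \<times> 's) set \<Rightarrow> ('d \<times> 's) set" where
  "second_stage w E2 M1 =
     (let E' = {e \<in> E2. snd e \<notin> snd ` M1} in
      SOME M. M \<subseteq> E' \<and> is_matching M \<and> mweight w M = max_mw w E')"

end

theory Submission imports Defs begin

lemma matching_subset: "is_matching M \<Longrightarrow> N \<subseteq> M \<Longrightarrow> is_matching N"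
  unfolding is_matching_def by blast

lemma matching_inj: "is_matching M \<Longrightarrow> inj_on snd M"
  unfolding is_matching_def inj_on_def by blast

lemma mw_set_fin: "finite E \<Longrightarrow> finite {mweight w M | M. M \<subseteq> E \<and> is_matching M}"
proof -
  assume "finite E"
  have "{mweight w M | M. M \<subseteq> E \<and> is_matching M} \<subseteq> mweight w ` Pow E" by auto
  thus ?thesis using \<open>finite E\<close> finite_subset by blast
qed

lemma mw_set_ne: "{mweight w M | M. M \<subseteq> E \<and> is_matching M} \<noteq> {}"
proof -
  have "is_matching {}" unfolding is_matching_def by simp
  thus ?thesis by blast
qed

lemma max_mw_exists: "finite E \<Longrightarrow> \<exists>M. M \<subseteq> E \<and> is_matching M \<and> mweight w M = max_mw w E"
proof -
  assume f: "finite E"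
  have "max_mw w E \<in> {mweight w M | M. M \<subseteq> E \<and> is_matching M}"
    unfolding max_mw_def using Max_in[OF mw_set_fin[OF f] mw_set_ne] .
  thus ?thesis by auto
qed

lemma max_mw_ge: "finite E \<Longrightarrow> M \<subseteq> E \<Longrightarrow> is_matching M \<Longrightarrow> mweight w M \<le> max_mw w E"
  unfolding max_mw_def by (rule Max_ge[OF mw_set_fin]) auto

lemma max_mw_mono: "finite F \<Longrightarrow> E \<subseteq> F \<Longrightarrow> max_mw w E \<le> max_mw w F"
proof -
  assume f: "finite F" and s: "E \<subseteq> F"
  then have "finite E" using finite_subset by blast
  then obtain M where "M \<subseteq> E" "is_matching M" "mweight w M = max_mw w E"
    using max_mw_exists by blast
  thus ?thesis using max_mw_ge[OF f, of M w] s by auto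
qed

lemma second_stage_props:
  assumes "finite E2"
  shows "second_stage w E2 M1 \<subseteq> {e \<in> E2. snd e \<notin> snd ` M1} \<and> is_matching (second_stage w E2 M1)
     \<and> mweight w (second_stage w E2 M1) = max_mw w {e \<in> E2. snd e \<notin> snd ` M1}"
proof -
  have "finite {e \<in> E2. snd e \<notin> snd ` M1}" using assms by simp
  from max_mw_exists[OF this, of w] show ?thesis
    unfolding second_stage_def Let_def by (rule someI_ex)
qed

lemma count_match:
  assumes "is_matching M" "M \<subseteq> E" "finite E"
  shows "(\<Sum>e\<in>{e\<in>E. snd e = j}. if e \<in> M then 1 else 0) = (if j \<in> snd ` M then (1::real) else 0)"
proof -
  have fin: "finite {e\<in>E. snd e = j}" using assms(3) by simp
  have "(\<Sum>e\<in>{e\<in>E. snd e = j}. if e \<in> M then (1::real) else 0) = (\<Sum>e\<in>{e\<in>E. snd e = j} \<inter> M. 1)"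
    by (rule sum.inter_restrict[OF fin, symmetric])
  also have "{e\<in>E. snd e = j} \<inter> M = {e\<in>M. snd e = j}" using assms(2) by blast
  also have "(\<Sum>e\<in>{e\<in>M. snd e = j}. (1::real)) = (if j \<in> snd ` M then 1 else 0)"
  proof (cases "j \<in> snd ` M")
    case True
    then obtain e where e: "e \<in> M" "snd e = j" by blast
    have "{e\<in>M. snd e = j} = {e}"
    proof
      show "{e\<in>M. snd e = j} \<subseteq> {e}"
      proof
        fix e' assume "e' \<in> {e\<in>M. snd e = j}"
        then have "e' \<in> M" "snd e' = snd e" using e by auto
        then show "e' \<in> {e}" using assms(1) e(1) unfolding is_matching_def by blast
      qed
    qed (use e in blast)
    thus ?thesis using True by simp
  next
    case False
    then have emp: "{e\<in>M. snd e = j} = {}" by blast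
    show ?thesis unfolding emp if_not_P[OF False] by (rule sum.empty)
  qed
  finally show ?thesis .
qed

lemma fg_lemma:
  assumes MsE1: "M \<subseteq> E1" and Mm: "is_matching M" and fE1: "finite E1" and fE2: "finite E2"
    and M'sub: "M' \<subseteq> E2" and M'm: "is_matching M'"
  shows "(\<Sum>e\<in>E1. if e\<in>M then w (snd e) else 0) + (\<Sum>j\<in>snd ` M'. w j * (1 - (\<Sum>e\<in>{e\<in>E1. snd e = j}. if e\<in>M then 1 else 0)))
    \<le> mweight w (M \<union> second_stage w E2 M)"
proof -
  let ?S' = "snd ` M'"
  have fS': "finite ?S'" using M'sub fE2 finite_subset by blast
  have fM: "finite M" using MsE1 fE1 finite_subset by blast
  let ?M2 = "second_stage w E2 M"
  have M2: "?M2 \<subseteq> {e \<in> E2. snd e \<notin> snd ` M}" "is_matching ?M2"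
    "mweight w ?M2 = max_mw w {e \<in> E2. snd e \<notin> snd ` M}" using second_stage_props[OF fE2, of w M] by auto
  have fM2: "finite ?M2" using finite_subset[OF M2(1)] fE2 by simp
  have disj: "snd ` M \<inter> snd ` ?M2 = {}"
  proof (rule equals0I)
    fix j assume "j \<in> snd ` M \<inter> snd ` ?M2"
    then have "j \<in> snd ` ?M2" "j \<in> snd ` M" by auto
    then show False using M2(1) by auto
  qed
  have "mweight w (M \<union> ?M2) = sum w (snd ` M \<union> snd ` ?M2)" unfolding mweight_def image_Un ..
  also have "\<dots> = sum w (snd ` M) + sum w (snd ` ?M2)"
    by (rule sum.union_disjoint) (use fM fM2 disj in simp_all)
  finally have f1: "mweight w (M \<union> ?M2) = sum w (snd ` M) + sum w (snd ` ?M2)" .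
  have "?S' - snd ` M = snd ` {e\<in>M'. snd e \<notin> snd ` M}" by auto
  then have "sum w (?S' - snd ` M) = mweight w {e\<in>M'. snd e \<notin> snd ` M}" unfolding mweight_def by simp
  also have "\<dots> \<le> max_mw w {e \<in> E2. snd e \<notin> snd ` M}"
  proof (rule max_mw_ge)
    show "finite {e \<in> E2. snd e \<notin> snd ` M}" using fE2 by simp
    show "{e\<in>M'. snd e \<notin> snd ` M} \<subseteq> {e \<in> E2. snd e \<notin> snd ` M}" using M'sub by auto
    show "is_matching {e\<in>M'. snd e \<notin> snd ` M}" by (rule matching_subset[OF M'm]) auto
  qed
  also have "\<dots> = sum w (snd ` ?M2)" using M2(3) unfolding mweight_def by simp
  finally have f2: "sum w (?S' - snd ` M) \<le> sum w (snd ` ?M2)" .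
  have g1: "(\<Sum>e\<in>E1. if e\<in>M then w (snd e) else 0) = sum w (snd ` M)"
  proof -
    have "(\<Sum>e\<in>E1. if e\<in>M then w (snd e) else 0) = (\<Sum>e\<in>E1 \<inter> M. w (snd e))"
      by (rule sum.inter_restrict[OF fE1, symmetric])
    also have "E1 \<inter> M = M" using MsE1 by auto
    also have "(\<Sum>e\<in>M. w (snd e)) = sum w (snd ` M)"
      using sum.reindex[OF matching_inj[OF Mm], of w] by simp
    finally show ?thesis .
  qed
  have g2: "(\<Sum>j\<in>?S'. w j * (1 - (\<Sum>e\<in>{e\<in>E1. snd e = j}. if e\<in>M then 1 else 0))) = sum w (?S' - snd ` M)"
  proof -
    have "(\<Sum>j\<in>?S'. w j * (1 - (\<Sum>e\<in>{e\<in>E1. snd e = j}. if e\<in>M then 1 else 0)))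
        = (\<Sum>j\<in>?S'. if j \<in> - snd ` M then w j else 0)"
    proof (rule sum.cong[OF refl])
      fix j
      show "w j * (1 - (\<Sum>e\<in>{e\<in>E1. snd e = j}. if e\<in>M then 1 else 0)) = (if j \<in> - snd ` M then w j else 0)"
        unfolding count_match[OF Mm MsE1 fE1] by simp
    qed
    also have "\<dots> = sum w (?S' \<inter> - snd ` M)" by (rule sum.inter_restrict[OF fS', symmetric])
    also have "?S' \<inter> - snd ` M = ?S' - snd ` M" by auto
    finally show ?thesis .
  qed
  show ?thesis using f1 f2 g1 g2 by linarith
qed

theorem mainTheorem8:
  fixes stage1 :: "'d set \<Rightarrow> 's set \<Rightarrow> ('d \<times> 's) set \<Rightarrow> ('s \<Rightarrow> real) \<Rightarrow> ('d \<times> 's) set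
                     \<Rightarrow> ('d \<times> 's \<Rightarrow> real)"
    and R C :: real
  assumes frac: "\<And>D1 D2 S E1 E2 w A. valid_instance D1 D2 S E1 E2 w A \<Longrightarrow>
                   frac_matching D1 S E1 (stage1 D1 S E1 w A)"
    and robust: "\<And>D1 D2 S E1 E2 w A. valid_instance D1 D2 S E1 E2 w A \<Longrightarrow>
                   ALG_frac D2 S E1 E2 w (stage1 D1 S E1 w A) \<ge> R * OPT w E1 E2"
    and consistent: "\<And>D1 D2 S E1 E2 w A. valid_instance D1 D2 S E1 E2 w A \<Longrightarrow>
                   ALG_frac D2 S E1 E2 w (stage1 D1 S E1 w A) \<ge> C * ADVICE w E2 A"
    and inst: "valid_instance D1 D2 S E1 E2 w A"
    and supp: "set_pmf p \<subseteq> {M. M \<subseteq> E1 \<and> is_matching M}"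
    and marg: "\<forall>e\<in>E1. measure_pmf.prob p {M. e \<in> M} = stage1 D1 S E1 w A e"
  shows "measure_pmf.expectation p (\<lambda>M1. mweight w (M1 \<union> second_stage w E2 M1))
           \<ge> R * OPT w E1 E2
       \<and> measure_pmf.expectation p (\<lambda>M1. mweight w (M1 \<union> second_stage w E2 M1))
           \<ge> C * ADVICE w E2 A"
proof -
  note vi = inst[unfolded valid_instance_def]
  have fD1: "finite D1" and fD2: "finite D2" and fS: "finite S"
    and E1s: "E1 \<subseteq> D1 \<times> S" and E2s: "E2 \<subseteq> D2 \<times> S" and wnn: "\<forall>j\<in>S. 0 \<le> w j"
    and AE1: "A \<subseteq> E1" and Am: "is_matching A" using vi by auto
  have fE1: "finite E1" using E1s fD1 fS finite_subset by blast
  have fE2: "finite E2" using E2s fD2 fS finite_subset by blast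
  define x where "x = stage1 D1 S E1 w A"
  have fm: "frac_matching D1 S E1 x" unfolding x_def by (rule frac[OF inst])
  have xle: "\<And>j. j \<in> S \<Longrightarrow> load E1 x j \<le> 1" using fm unfolding frac_matching_def by auto
  define T where "T = set_pmf p"
  have TE1: "\<And>M. M \<in> T \<Longrightarrow> M \<subseteq> E1 \<and> is_matching M" using supp unfolding T_def by auto
  have fT: "finite T"
  proof -
    have "T \<subseteq> Pow E1" using TE1 by auto
    thus ?thesis using fE1 finite_subset by blast
  qed
  define f where "f = (\<lambda>M1. mweight w (M1 \<union> second_stage w E2 M1))"
  have Eint: "measure_pmf.expectation p f = (\<Sum>M\<in>T. f M * pmf p M)"
    by (rule integral_measure_pmf_real) (use fT in \<open>auto simp: T_def\<close>)
  have xe: "x e = (\<Sum>M\<in>T. pmf p M * (if e \<in> M then 1 else 0))" if "e \<in> E1" for e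
  proof -
    have "x e = measure_pmf.prob p {M. e \<in> M}" using marg that unfolding x_def by auto
    also have "\<dots> = measure_pmf.prob p ({M. e \<in> M} \<inter> T)" unfolding T_def by (rule measure_Int_set_pmf[symmetric])
    also have "\<dots> = sum (pmf p) (T \<inter> {M. e \<in> M})" by (subst measure_measure_pmf_finite) (use fT in \<open>auto simp: Int_commute\<close>)
    also have "\<dots> = (\<Sum>M\<in>T. if M \<in> {M. e \<in> M} then pmf p M else 0)" by (rule sum.inter_restrict[OF fT])
    finally show ?thesis by (auto intro: sum.cong)
  qed
  have sumq: "(\<Sum>M\<in>T. pmf p M) = 1" using sum_pmf_eq_1[OF fT] unfolding T_def by simp
  have key: "ALG_frac D2 S E1 M' w x \<le> measure_pmf.expectation p f" if M'sub: "M' \<subseteq> E2" and M'm: "is_matching M'" for M'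
  proof -
    let ?S' = "snd ` M'"
    have S'S: "?S' \<subseteq> S" using M'sub E2s by auto
    have fS': "finite ?S'" using S'S fS finite_subset by blast
    define g where "g M = (\<Sum>e\<in>E1. if e\<in>M then w (snd e) else 0) + (\<Sum>j\<in>?S'. w j * (1 - (\<Sum>e\<in>{e\<in>E1. snd e = j}. if e\<in>M then 1 else 0)))" for M
    have fg: "g M \<le> f M" if "M \<in> T" for M
      unfolding g_def f_def by (rule fg_lemma) (use TE1[OF that] fE1 fE2 M'sub M'm in auto)
    have Eg: "(\<Sum>M\<in>T. g M * pmf p M) = (\<Sum>j\<in>S. w j * load E1 x j) + (\<Sum>j\<in>?S'. w j * (1 - load E1 x j))"
    proof -
      have a: "(\<Sum>M\<in>T. (\<Sum>e\<in>E1. if e\<in>M then w (snd e) else 0) * pmf p M) = (\<Sum>j\<in>S. w j * load E1 x j)"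
      proof -
        have "(\<Sum>M\<in>T. (\<Sum>e\<in>E1. if e\<in>M then w (snd e) else 0) * pmf p M)
            = (\<Sum>M\<in>T. \<Sum>e\<in>E1. w (snd e) * (pmf p M * (if e\<in>M then 1 else 0)))"
          by (auto simp: sum_distrib_right intro!: sum.cong)
        also have "\<dots> = (\<Sum>e\<in>E1. \<Sum>M\<in>T. w (snd e) * (pmf p M * (if e\<in>M then 1 else 0)))"
          by (rule sum.swap)
        also have "\<dots> = (\<Sum>e\<in>E1. w (snd e) * x e)"
          by (rule sum.cong) (auto simp: xe sum_distrib_left)
        also have "\<dots> = (\<Sum>j\<in>S. \<Sum>e\<in>{e\<in>E1. snd e = j}. w (snd e) * x e)"
          by (rule sum.group[symmetric]) (use fE1 fS E1s in auto)
        also have "\<dots> = (\<Sum>j\<in>S. w j * load E1 x j)"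
          by (auto simp: load_def sum_distrib_left intro!: sum.cong)
        finally show ?thesis .
      qed
      have b: "(\<Sum>M\<in>T. (\<Sum>j\<in>?S'. w j * (1 - (\<Sum>e\<in>{e\<in>E1. snd e = j}. if e\<in>M then 1 else 0))) * pmf p M)
          = (\<Sum>j\<in>?S'. w j * (1 - load E1 x j))"
      proof -
        have "(\<Sum>M\<in>T. (\<Sum>j\<in>?S'. w j * (1 - (\<Sum>e\<in>{e\<in>E1. snd e = j}. if e\<in>M then 1 else 0))) * pmf p M)
          = (\<Sum>j\<in>?S'. \<Sum>M\<in>T. w j * (pmf p M - (\<Sum>e\<in>{e\<in>E1. snd e = j}. pmf p M * (if e\<in>M then 1 else 0))))"
        proof -
          have "\<And>M. (\<Sum>j\<in>?S'. w j * (1 - (\<Sum>e\<in>{e\<in>E1. snd e = j}. if e\<in>M then 1 else 0))) * pmf p M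
             = (\<Sum>j\<in>?S'. w j * (pmf p M - (\<Sum>e\<in>{e\<in>E1. snd e = j}. pmf p M * (if e\<in>M then 1 else 0))))"
          proof -
            fix M
            have "\<And>j. w j * (1 - (\<Sum>e\<in>{e\<in>E1. snd e = j}. if e\<in>M then 1 else 0)) * pmf p M
               = w j * (pmf p M - (\<Sum>e\<in>{e\<in>E1. snd e = j}. pmf p M * (if e\<in>M then 1 else 0)))"
            proof -
              fix j
              have "pmf p M * (\<Sum>e\<in>{e\<in>E1. snd e = j}. if e\<in>M then 1 else 0) = (\<Sum>e\<in>{e\<in>E1. snd e = j}. pmf p M * (if e\<in>M then 1 else 0))"
                by (rule sum_distrib_left)
              then show "w j * (1 - (\<Sum>e\<in>{e\<in>E1. snd e = j}. if e\<in>M then 1 else 0)) * pmf p M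
               = w j * (pmf p M - (\<Sum>e\<in>{e\<in>E1. snd e = j}. pmf p M * (if e\<in>M then 1 else 0)))"
                by (simp add: algebra_simps)
            qed
            then show "(\<Sum>j\<in>?S'. w j * (1 - (\<Sum>e\<in>{e\<in>E1. snd e = j}. if e\<in>M then 1 else 0))) * pmf p M
             = (\<Sum>j\<in>?S'. w j * (pmf p M - (\<Sum>e\<in>{e\<in>E1. snd e = j}. pmf p M * (if e\<in>M then 1 else 0))))"
              by (subst sum_distrib_right) (rule sum.cong[OF refl])
          qed
          then have "(\<Sum>M\<in>T. (\<Sum>j\<in>?S'. w j * (1 - (\<Sum>e\<in>{e\<in>E1. snd e = j}. if e\<in>M then 1 else 0))) * pmf p M)
            = (\<Sum>M\<in>T. \<Sum>j\<in>?S'. w j * (pmf p M - (\<Sum>e\<in>{e\<in>E1. snd e = j}. pmf p M * (if e\<in>M then 1 else 0))))"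
            by simp
          also have "\<dots> = (\<Sum>j\<in>?S'. \<Sum>M\<in>T. w j * (pmf p M - (\<Sum>e\<in>{e\<in>E1. snd e = j}. pmf p M * (if e\<in>M then 1 else 0))))"
            by (rule sum.swap)
          finally show ?thesis .
        qed
        also have "\<dots> = (\<Sum>j\<in>?S'. w j * (1 - load E1 x j))"
        proof (rule sum.cong[OF refl])
          fix j assume "j \<in> ?S'"
          have "(\<Sum>M\<in>T. w j * (pmf p M - (\<Sum>e\<in>{e\<in>E1. snd e = j}. pmf p M * (if e\<in>M then 1 else 0))))
             = w j * ((\<Sum>M\<in>T. pmf p M) - (\<Sum>e\<in>{e\<in>E1. snd e = j}. \<Sum>M\<in>T. pmf p M * (if e\<in>M then 1 else 0)))"
          proof -
            have "(\<Sum>M\<in>T. (\<Sum>e\<in>{e\<in>E1. snd e = j}. pmf p M * (if e\<in>M then 1 else 0)))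
              = (\<Sum>e\<in>{e\<in>E1. snd e = j}. \<Sum>M\<in>T. pmf p M * (if e\<in>M then 1 else 0))"
              by (rule sum.swap)
            then show ?thesis by (simp add: sum_distrib_left[symmetric] sum_subtractf)
          qed
          also have "\<dots> = w j * (1 - load E1 x j)"
            by (simp add: sumq load_def xe)
          finally show "(\<Sum>M\<in>T. w j * (pmf p M - (\<Sum>e\<in>{e\<in>E1. snd e = j}. pmf p M * (if e\<in>M then 1 else 0)))) = w j * (1 - load E1 x j)" .
        qed
        finally show ?thesis .
      qed
      show ?thesis unfolding g_def using a b by (simp add: distrib_right sum.distrib)
    qed
    have P2: "P2_opt D2 S E1 M' w x \<le> (\<Sum>j\<in>?S'. w j * (1 - load E1 x j))"
      unfolding P2_opt_def
    proof (rule cSup_least)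
      have "P2_feasible D2 S E1 M' x (\<lambda>_. 0)"
        unfolding P2_feasible_def load_def using xle by (auto simp: load_def)
      thus "{\<Sum>j\<in>S. w j * load M' y j |y. P2_feasible D2 S E1 M' x y} \<noteq> {}" by blast
    next
      fix v assume "v \<in> {\<Sum>j\<in>S. w j * load M' y j |y. P2_feasible D2 S E1 M' x y}"
      then obtain y where v: "v = (\<Sum>j\<in>S. w j * load M' y j)" and fy: "P2_feasible D2 S E1 M' x y" by auto
      have "v \<le> (\<Sum>j\<in>S. if j \<in> ?S' then w j * (1 - load E1 x j) else 0)"
        unfolding v
      proof (rule sum_mono)
        fix j assume jS: "j \<in> S"
        show "w j * load M' y j \<le> (if j \<in> ?S' then w j * (1 - load E1 x j) else 0)"
        proof (cases "j \<in> ?S'")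
          case True
          have "load M' y j \<le> 1 - load E1 x j" using fy jS unfolding P2_feasible_def by auto
          thus ?thesis using True wnn jS by (simp add: mult_left_mono)
        next
          case False
          then have emp: "{e \<in> M'. snd e = j} = {}" by force
          show ?thesis unfolding load_def emp if_not_P[OF False] by simp
        qed
      qed
      also have "\<dots> = (\<Sum>j\<in>S \<inter> ?S'. w j * (1 - load E1 x j))" by (rule sum.inter_restrict[OF fS, symmetric])
      also have "S \<inter> ?S' = ?S'" using S'S by auto
      finally show "v \<le> (\<Sum>j\<in>?S'. w j * (1 - load E1 x j))" .
    qed
    have "ALG_frac D2 S E1 M' w x \<le> (\<Sum>M\<in>T. g M * pmf p M)"
      unfolding ALG_frac_def Eg using P2 by simp
    also have "\<dots> \<le> (\<Sum>M\<in>T. f M * pmf p M)"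
      by (rule sum_mono) (use fg in \<open>auto intro: mult_right_mono simp: T_def\<close>)
    finally show ?thesis using Eint by simp
  qed
  have vi': "valid_instance D1 D2 S E1 M' w A" if "M' \<subseteq> E2" for M'
    using vi that unfolding valid_instance_def by auto
  have r: "R * OPT w E1 E2 \<le> measure_pmf.expectation p f"
  proof -
    have fU: "finite (E1 \<union> E2)" using fE1 fE2 by simp
    obtain Mo where Mo: "Mo \<subseteq> E1 \<union> E2" "is_matching Mo" "mweight w Mo = max_mw w (E1 \<union> E2)"
      using max_mw_exists[OF fU] by blast
    let ?M' = "Mo \<inter> E2"
    have m': "is_matching ?M'" using matching_subset[OF Mo(2)] by auto
    have "OPT w E1 ?M' = OPT w E1 E2"
    proof -
      have "OPT w E1 ?M' \<le> OPT w E1 E2" unfolding OPT_def by (rule max_mw_mono[OF fU]) auto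
      moreover have "OPT w E1 E2 \<le> OPT w E1 ?M'"
      proof -
        have s: "Mo \<subseteq> E1 \<union> ?M'" using Mo(1) by blast
        have f: "finite (E1 \<union> ?M')" using fE1 fE2 by simp
        show ?thesis unfolding OPT_def Mo(3)[symmetric] by (rule max_mw_ge[OF f s Mo(2)])
      qed
      ultimately show ?thesis by simp
    qed
    then have "R * OPT w E1 E2 \<le> ALG_frac D2 S E1 ?M' w x"
      using robust[OF vi'[of ?M']] unfolding x_def by auto
    also have "\<dots> \<le> measure_pmf.expectation p f" by (rule key) (use m' in auto)
    finally show ?thesis .
  qed
  have c: "C * ADVICE w E2 A \<le> measure_pmf.expectation p f"
  proof -
    have fF: "finite {e \<in> E2. snd e \<notin> snd ` A}" using fE2 by simp
    obtain Ma where Ma: "Ma \<subseteq> {e \<in> E2. snd e \<notin> snd ` A}" "is_matching Ma" "mweight w Ma = max_mw w {e \<in> E2. snd e \<notin> snd ` A}"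
      using max_mw_exists[OF fF] by blast
    have fMa: "finite Ma" using Ma(1) fF finite_subset by blast
    have eq: "{e \<in> Ma. snd e \<notin> snd ` A} = Ma" using Ma(1) by auto
    have "max_mw w Ma = mweight w Ma"
    proof -
      have "max_mw w Ma \<le> mweight w Ma" using max_mw_mono[OF fF Ma(1)] Ma(3) by simp
      moreover have "mweight w Ma \<le> max_mw w Ma" by (rule max_mw_ge[OF fMa _ Ma(2)]) simp
      ultimately show ?thesis by simp
    qed
    then have "ADVICE w Ma A = ADVICE w E2 A" unfolding ADVICE_def eq using Ma(3) by simp
    then have "C * ADVICE w E2 A \<le> ALG_frac D2 S E1 Ma w x"
      using consistent[OF vi'[of Ma]] Ma(1) unfolding x_def by auto
    also have "\<dots> \<le> measure_pmf.expectation p f" by (rule key) (use Ma in auto)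
    finally show ?thesis .
  qed
  show ?thesis using r c unfolding f_def by simp
qed

end
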